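(* Let $u$ be the root of $P_{(1,3)}^{(1)}$ and $v$ the root of $P_{(2,1)}^{(2)}$, as described in the context. Then $$t_{\left (P_{(1,3)}^{(1)},u\right )}(\lambda )<t_{\left (P_{(2,1)}^{(2)},v\right )}(\lambda )\quad\mbox{for all }\lambda >2.$$
   Context: For a graph $G$, $\phi_G(\lambda)=\det(\lambda I-A(G))$ denotes its characteristic polynomial, where $A(G)$ is the adjacency matrix. For $\lambda>2$, let $x_1=\frac{\lambda-\sqrt{\lambda^2-4}}{2}$ and $x_2=\frac{\lambda+\sqrt{\lambda^2-4}}{2}$ be the two roots of $x^2-\lambda x+1=0$ (so $x_1+x_2=\lambda$, $x_1x_2=1$, $x_1<1<x_2$). For a rooted graph $(G,v)$ (a graph $G$ with a designated vertex $v$), the functions $p_{(G,v)}$ and $q_{(G,v)}$ are defined by $\phi_G=p_{(G,v)}+q_{(G,v)}$ and $\phi_{G-v}=x_2p_{(G,v)}+x_1q_{(G,v)}$, where $G-v$ is $G$ with vertex $v$ deleted, and $t_{(G,v)}:=q_{(G,v)}/p_{(G,v)}$. The graph $P_{(1,3)}^{(1)}$ is the tree with exactly one vertex of degree $3$ from which three pendent paths of lengths $1$, $1$ and $3$ emanate (6 vertices); its root $u$ is the vertex on the length-$3$ path at distance $2$ from the degree-$3$ vertex (i.e. the neighbour of that path's endpoint). The graph $P_{(2,1)}^{(2)}$ is the tree with exactly one vertex of degree $3$ from which three pendent paths of lengths $2$, $2$ and $1$ emanate (6 vertices); its root $v$ is the endpoint of the length-$1$ path. *)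

theory Defs
  imports "Jordan_Normal_Form.Char_Poly" Complex_Main
begin

definition adj_mat :: "nat \<Rightarrow> (nat \<times> nat) set \<Rightarrow> real mat" where
  "adj_mat n E = mat n n (\<lambda>(i,j). if i \<noteq> j \<and> ((i,j) \<in> E \<or> (j,i) \<in> E) then 1 else 0)"

definition phi :: "real mat \<Rightarrow> real \<Rightarrow> real" where
  "phi A lam = poly (char_poly A) lam"

definition del_vertex :: "real mat \<Rightarrow> nat \<Rightarrow> real mat" where
  "del_vertex A v = mat_delete A v v"

definition x1 :: "real \<Rightarrow> real" where
  "x1 lam = (lam - sqrt (lam\<^sup>2 - 4)) / 2"

definition x2 :: "real \<Rightarrow> real" where
  "x2 lam = (lam + sqrt (lam\<^sup>2 - 4)) / 2"

text \<open>p and q are the unique solution (for lambda > 2, where x1 \<noteq> x2) of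
  phi_G = p + q and phi_{G-v} = x2 p + x1 q.\<close>
definition p_root :: "real mat \<Rightarrow> nat \<Rightarrow> real \<Rightarrow> real" where
  "p_root A v lam = (phi (del_vertex A v) lam - x1 lam * phi A lam) / (x2 lam - x1 lam)"

definition q_root :: "real mat \<Rightarrow> nat \<Rightarrow> real \<Rightarrow> real" where
  "q_root A v lam = (x2 lam * phi A lam - phi (del_vertex A v) lam) / (x2 lam - x1 lam)"

definition t_root :: "real mat \<Rightarrow> nat \<Rightarrow> real \<Rightarrow> real" where
  "t_root A v lam = q_root A v lam / p_root A v lam"

text \<open>P_{(1,3)}^{(1)}: centre 0, pendant paths 0-1, 0-2 and 0-3-4-5; root u = 4.\<close>
definition P13_1 :: "real mat" where
  "P13_1 = adj_mat 6 {(0,1),(0,2),(0,3),(3,4),(4,5)}"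

text \<open>P_{(2,1)}^{(2)}: centre 0, pendant paths 0-1-2, 0-3-4 and 0-5; root v = 5.\<close>
definition P21_2 :: "real mat" where
  "P21_2 = adj_mat 6 {(0,1),(1,2),(0,3),(3,4),(0,5)}"

end

theory Submission imports Defs begin

lemma det_mat_expand:
  "det (mat n n f) = (if n = 0 then 1 else
     (\<Sum>i<n. if f (i,0) = 0 then 0 else
        f (i,0) * ((-1)^i * det (mat (n-1) (n-1) (\<lambda>(a,b). f (if a < i then a else Suc a, Suc b))))))"
proof (cases "n = 0")
  case True thus ?thesis by (simp add: det_dim_zero)
next
  case False
  have "det (mat n n f) = (\<Sum>i<n. mat n n f $$ (i,0) * cofactor (mat n n f) i 0)"
    by (rule laplace_expansion_column, insert False, auto)
  also have "\<dots> = (\<Sum>i<n. if f (i,0) = 0 then 0 else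
        f (i,0) * ((-1)^i * det (mat (n-1) (n-1) (\<lambda>(a,b). f (if a < i then a else Suc a, Suc b)))))"
  proof (rule sum.cong[OF refl])
    fix i assume i: "i \<in> {..<n}"
    have "mat_delete (mat n n f) i 0 = mat (n-1) (n-1) (\<lambda>(a,b). f (if a < i then a else Suc a, Suc b))"
      by (rule eq_matI, insert i False, auto simp: mat_delete_def)
    thus "mat n n f $$ (i,0) * cofactor (mat n n f) i 0 = (if f (i,0) = 0 then 0 else
        f (i,0) * ((-1)^i * det (mat (n-1) (n-1) (\<lambda>(a,b). f (if a < i then a else Suc a, Suc b)))))"
      using i False by (simp add: cofactor_def)
  qed
  finally show ?thesis using False by simp
qed

lemma cpm: "A \<in> carrier_mat n n \<Longrightarrow> char_poly_matrix A = mat n n (\<lambda>(i,j). (if i = j then [:0,1:] else 0) + [: - A $$ (i,j) :])"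
  by (rule eq_matI, auto simp: char_poly_matrix_def)

lemma phi_eq: "A \<in> carrier_mat n n \<Longrightarrow> phi A lam = poly (det (mat n n (\<lambda>(i,j). (if i = j then [:0,1:] else 0) + [: - A $$ (i,j) :]))) lam"
  unfolding phi_def char_poly_def by (simp add: cpm)

lemma adj_carrier: "adj_mat n E \<in> carrier_mat n n" unfolding adj_mat_def by auto


lemma phi1: "phi P13_1 lam = lam^6 - 5*lam^4 + 5*lam^2"
  unfolding P13_1_def
  apply (subst phi_eq[OF adj_carrier])
  apply (simp add: adj_mat_def numeral_eq_Suc lessThan_Suc det_mat_expand)
  apply (simp add: algebra_simps)
  done

lemma dphi1: "phi (del_vertex P13_1 4) lam = lam^5 - 3*lam^3"
proof -
  have "del_vertex P13_1 4 = mat 5 5 (\<lambda>(i,j). P13_1 $$ (if i < 4 then i else Suc i, if j < 4 then j else Suc j))"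
    unfolding del_vertex_def mat_delete_def P13_1_def adj_mat_def by simp
  also have "\<dots> \<in> carrier_mat 5 5" by simp
  ultimately show ?thesis
  apply (simp only: phi_eq)
  apply (simp add: P13_1_def adj_mat_def numeral_eq_Suc lessThan_Suc det_mat_expand)
  apply (simp add: algebra_simps)
  done
qed

lemma phi2: "phi P21_2 lam = lam^6 - 5*lam^4 + 5*lam^2 - 1"
  unfolding P21_2_def
  apply (subst phi_eq[OF adj_carrier])
  apply (simp add: adj_mat_def numeral_eq_Suc lessThan_Suc det_mat_expand)
  apply (simp add: algebra_simps)
  done

lemma dphi2: "phi (del_vertex P21_2 5) lam = lam^5 - 4*lam^3 + 3*lam"
proof -
  have "del_vertex P21_2 5 = mat 5 5 (\<lambda>(i,j). P21_2 $$ (if i < 5 then i else Suc i, if j < 5 then j else Suc j))"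
    unfolding del_vertex_def mat_delete_def P21_2_def adj_mat_def by simp
  also have "\<dots> \<in> carrier_mat 5 5" by simp
  ultimately show ?thesis
  apply (simp only: phi_eq)
  apply (simp add: P21_2_def adj_mat_def numeral_eq_Suc lessThan_Suc det_mat_expand)
  apply (simp add: algebra_simps)
  done
qed

theorem lemma2p9:
  fixes lam :: real
  assumes "lam > 2"
  shows "t_root P13_1 4 lam < t_root P21_2 5 lam"
proof -
  define s where "s = sqrt (lam\<^sup>2 - 4)"
  define a where "a = x1 lam"
  define b where "b = x2 lam"
  have "lam\<^sup>2 > 2\<^sup>2" by (rule power_strict_mono) (use assms in auto)
  hence l2: "lam\<^sup>2 > 4" by simp
  have s0: "s > 0" unfolding s_def using l2 by simp
  have ss: "s\<^sup>2 = lam\<^sup>2 - 4" unfolding s_def using l2 by simp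
  have ab: "a * b = 1" unfolding a_def b_def x1_def x2_def s_def[symmetric]
    using ss by (simp add: field_simps power2_eq_square)
  have b1: "b > 1" unfolding b_def x2_def s_def[symmetric] using s0 assms by simp
  have leq: "lam = a + b" unfolding a_def b_def x1_def x2_def by (simp add: field_simps)
  have aeq: "a = 1/b" using ab b1 by (auto simp: field_simps)
  have a0: "a > 0" using aeq b1 by simp
  have a1: "a < 1" using aeq b1 by simp
  have ba: "b - a > 0" using a1 b1 by simp
  define pn1 where "pn1 = b^3 + b + a + 2*a^3 - a^7"
  define qn1 where "qn1 = b^7 - 2*b^3 - b - a - a^3"
  define pn2 where "pn2 = b + 2*a + a^3 - a^7"
  define qn2 where "qn2 = b^7 - b^3 - 2*b - a"
  have e1: "phi (del_vertex P13_1 4) lam - a * phi P13_1 lam = pn1"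
    unfolding dphi1 phi1 pn1_def leq using ab by Groebner_Basis.algebra
  have e2: "b * phi P13_1 lam - phi (del_vertex P13_1 4) lam = qn1"
    unfolding dphi1 phi1 qn1_def leq using ab by Groebner_Basis.algebra
  have e3: "phi (del_vertex P21_2 5) lam - a * phi P21_2 lam = pn2"
    unfolding dphi2 phi2 pn2_def leq using ab by Groebner_Basis.algebra
  have e4: "b * phi P21_2 lam - phi (del_vertex P21_2 5) lam = qn2"
    unfolding dphi2 phi2 qn2_def leq using ab by Groebner_Basis.algebra
  have t1: "t_root P13_1 4 lam = qn1 / pn1"
    unfolding t_root_def p_root_def q_root_def a_def[symmetric] b_def[symmetric] e1 e2
    using ba by simp
  have t2: "t_root P21_2 5 lam = qn2 / pn2"
    unfolding t_root_def p_root_def q_root_def a_def[symmetric] b_def[symmetric] e3 e4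
    using ba by simp
  have a6: "a^6 \<le> 1" using a0 a1 by (intro power_le_one) auto
  have a7e: "a^7 = a * a^6" by Groebner_Basis.algebra
  have a7: "a^7 \<le> a" using mult_left_mono[OF a6, of a] a0 a7e by simp
  have pp1: "pn1 > 0" unfolding pn1_def using a7 a0 b1 by (smt (verit) zero_less_power)
  have pp2: "pn2 > 0" unfolding pn2_def using a7 a0 b1 by (smt (verit) zero_less_power)
  have "qn2 * pn1 - qn1 * pn2 = (b^2-a^2)^3*((b^2+a^2)^2-1)"
    unfolding pn1_def qn1_def pn2_def qn2_def using ab by Groebner_Basis.algebra
  moreover have "(b^2-a^2)^3*((b^2+a^2)^2-1) > 0"
  proof -
    have "a < b" using a1 b1 by simp
    hence "a^2 < b^2" using a0 by (intro power_strict_mono) auto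
    moreover have "b^2 > 1" using b1 by simp
    hence "b^2 + a^2 > 1" using a0 by (simp add: add_pos_pos add.commute less_add_same_cancel1 pos_add_strict)
    hence "(b^2+a^2)^2 > 1" by simp
    moreover note \<open>a^2 < b^2\<close>
    ultimately show ?thesis by simp
  qed
  ultimately have "qn1 * pn2 < qn2 * pn1" by linarith
  thus ?thesis unfolding t1 t2 using pp1 pp2 by (simp add: divide_less_eq less_divide_eq mult.commute)
qed

end
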